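(* Let $k,D,s^{\mathrm{in}}>0$, let $K_1,\dots,K_5>0$, and let $\mu:[0,\infty)\to[0,\infty)$ satisfy $\mu(0)=0$, $\mu(s)>0$ for $s>0$, $\mu\le\mu_{\max}<\infty$, and be continuous at $0$. For $x=(b,s)^*\in\mathbb{R}_+^2$ define the rates $$\lambda_1(x)=K_1\mu(s)b,\quad \lambda_2(x)=K_2k\mu(s)b,\quad \lambda_3(x)=K_3Ds^{\mathrm{in}},\quad \lambda_4(x)=K_4Db,\quad \lambda_5(x)=K_5Ds,$$ the state-dependent jumps $$\nu_1(x)=\begin{pmatrix}\frac1{K_1}\\0\end{pmatrix},\ \nu_2(x)=-\begin{pmatrix}0\\ \frac{1\wedge K_2 s}{K_2}\end{pmatrix},\ \nu_3(x)=\begin{pmatrix}0\\ \frac1{K_3}\end{pmatrix},\ \nu_4(x)=-\begin{pmatrix}\frac{1\wedge K_4 b}{K_4}\\0\end{pmatrix},\ \nu_5(x)=-\begin{pmatrix}0\\ \frac{1\wedge K_5 s}{K_5}\end{pmatrix},$$ and the constant jumps $$\nu_1=\begin{pmatrix}\frac1{K_1}\\0\end{pmatrix},\ \nu_2=-\begin{pmatrix}0\\ \frac1{K_2}\end{pmatrix},\ \nu_3=\begin{pmatrix}0\\ \frac1{K_3}\end{pmatrix},\ \nu_4=-\begin{pmatrix}\frac1{K_4}\\0\end{pmatrix},\ \nu_5=-\begin{pmatrix}0\\ \frac1{K_5}\end{pmatrix}.$$ Let $\lambda(x)=\sum_{i=1}^5\lambda_i(x)$, $\bar\lambda_i(x)=\lambda_i(x)/\lambda(x)$,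 $f_K(x)=\sum_{i=1}^5\nu_i(x)\lambda_i(x)$, $m_K(x)=\sum_{i=1}^5\nu_i(x)\bar\lambda_i(x)$, $m(x)=\sum_{i=1}^5\nu_i\bar\lambda_i(x)$, and $$f(x)=\begin{pmatrix}\mu(s)b-Db\\ -k\mu(s)b+D(s^{\mathrm{in}}-s)\end{pmatrix}.$$ Then $|\nu_i(x)|\le|\nu_i|$ for all $i$ and $x$. Let $$\mathcal{R}_K=\Big\{x=(b,s)^*\in\mathbb{R}_+^2:\ b\le \tfrac1{K_4}\ \text{or}\ s\le\tfrac1{K_2}\ \text{or}\ s\le\tfrac1{K_5}\Big\}.$$ For $x\notin\mathcal{R}_K$ one has $\nu_i(x)=\nu_i$ for all $i$, $m_K(x)=m(x)$ and $f_K(x)=f(x)$. For all $x=(b,s)^*\in\mathbb{R}_+^2$: $$|\nu_i(x)-\nu_i|\le\frac1{\min_{j=1,\dots,5}K_j}\ (i=1,\dots,5),\qquad |m_K(x)-m(x)|\le\frac1{\min_{j=1,\dots,5}K_j},$$ $$|f_K(x)-f(x)|\le(1-K_2s)^+k\mu(s)b+(1-K_4b)^+Db+(1-K_5s)^+Ds.$$ Consequently $f_K(x)\to f(x)$ as $K_i\to\infty$ for all $i=1,\dots,5$, and this convergence is uniform on every compact subset of $(0,\infty)^2$.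
   Context: Here $|\cdot|$ is the Euclidean norm on $\mathbb{R}^2$, $a\wedge c=\min(a,c)$ and $a^+=\max(a,0)$. Note $\lambda(x)\ge K_3Ds^{\mathrm{in}}>0$, so $\bar\lambda_i$ is well defined. These objects describe a stochastic chemostat model with biomass concentration $b$ and substrate concentration $s$, dilution rate $D$, inflow substrate concentration $s^{\mathrm{in}}$, stoichiometric coefficient $k$, specific growth rate $\mu$, and scale parameters $K_i$. *)

theory Defs
  imports "HOL-Analysis.Analysis"
begin

(* Scale parameters K_1..K_5 are given as K :: nat \<Rightarrow> real, indices 1..5.
   Parameters: K, k (stoichiometric), D (dilution), sinn (s^in), mu (growth rate). *)

definition Rplus2 :: "(real \<times> real) set" where
  "Rplus2 = {(b, s). 0 \<le> b \<and> 0 \<le> s}"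

definition lam :: "(nat \<Rightarrow> real) \<Rightarrow> real \<Rightarrow> real \<Rightarrow> real \<Rightarrow> (real \<Rightarrow> real) \<Rightarrow> nat \<Rightarrow> real \<times> real \<Rightarrow> real" where
  "lam K k D sinn mu i x = (case x of (b, s) \<Rightarrow>
      if i = 1 then K 1 * mu s * b
      else if i = 2 then K 2 * k * mu s * b
      else if i = 3 then K 3 * D * sinn
      else if i = 4 then K 4 * D * b
      else if i = 5 then K 5 * D * s
      else 0)"

definition lamtot :: "(nat \<Rightarrow> real) \<Rightarrow> real \<Rightarrow> real \<Rightarrow> real \<Rightarrow> (real \<Rightarrow> real) \<Rightarrow> real \<times> real \<Rightarrow> real" where
  "lamtot K k D sinn mu x = (\<Sum>i\<in>{1..5}. lam K k D sinn mu i x)"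

definition lambar :: "(nat \<Rightarrow> real) \<Rightarrow> real \<Rightarrow> real \<Rightarrow> real \<Rightarrow> (real \<Rightarrow> real) \<Rightarrow> nat \<Rightarrow> real \<times> real \<Rightarrow> real" where
  "lambar K k D sinn mu i x = lam K k D sinn mu i x / lamtot K k D sinn mu x"

definition nuK :: "(nat \<Rightarrow> real) \<Rightarrow> nat \<Rightarrow> real \<times> real \<Rightarrow> real \<times> real" where
  "nuK K i x = (case x of (b, s) \<Rightarrow>
      if i = 1 then (1 / K 1, 0)
      else if i = 2 then - (0, min 1 (K 2 * s) / K 2)
      else if i = 3 then (0, 1 / K 3)
      else if i = 4 then - (min 1 (K 4 * b) / K 4, 0)
      else if i = 5 then - (0, min 1 (K 5 * s) / K 5)
      else (0, 0))"

definition nu :: "(nat \<Rightarrow> real) \<Rightarrow> nat \<Rightarrow> real \<times> real" where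
  "nu K i =
      (if i = 1 then (1 / K 1, 0)
      else if i = 2 then - (0, 1 / K 2)
      else if i = 3 then (0, 1 / K 3)
      else if i = 4 then - (1 / K 4, 0)
      else if i = 5 then - (0, 1 / K 5)
      else (0, 0))"

definition fK :: "(nat \<Rightarrow> real) \<Rightarrow> real \<Rightarrow> real \<Rightarrow> real \<Rightarrow> (real \<Rightarrow> real) \<Rightarrow> real \<times> real \<Rightarrow> real \<times> real" where
  "fK K k D sinn mu x = (\<Sum>i\<in>{1..5}. lam K k D sinn mu i x *\<^sub>R nuK K i x)"

definition mK :: "(nat \<Rightarrow> real) \<Rightarrow> real \<Rightarrow> real \<Rightarrow> real \<Rightarrow> (real \<Rightarrow> real) \<Rightarrow> real \<times> real \<Rightarrow> real \<times> real" where
  "mK K k D sinn mu x = (\<Sum>i\<in>{1..5}. lambar K k D sinn mu i x *\<^sub>R nuK K i x)"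

definition m :: "(nat \<Rightarrow> real) \<Rightarrow> real \<Rightarrow> real \<Rightarrow> real \<Rightarrow> (real \<Rightarrow> real) \<Rightarrow> real \<times> real \<Rightarrow> real \<times> real" where
  "m K k D sinn mu x = (\<Sum>i\<in>{1..5}. lambar K k D sinn mu i x *\<^sub>R nu K i)"

definition f :: "real \<Rightarrow> real \<Rightarrow> real \<Rightarrow> (real \<Rightarrow> real) \<Rightarrow> real \<times> real \<Rightarrow> real \<times> real" where
  "f k D sinn mu x = (case x of (b, s) \<Rightarrow>
      (mu s * b - D * b, - k * mu s * b + D * (sinn - s)))"

definition RK :: "(nat \<Rightarrow> real) \<Rightarrow> (real \<times> real) set" where
  "RK K = {(b, s). 0 \<le> b \<and> 0 \<le> s \<and> (b \<le> 1 / K 4 \<or> s \<le> 1 / K 2 \<or> s \<le> 1 / K 5)}"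

definition Kmin :: "(nat \<Rightarrow> real) \<Rightarrow> real" where
  "Kmin K = Min (K ` {1..5})"

end

theory Submission
  imports Defs
begin


lemma five: "{1..5::nat} = {1,2,3,4,5}" by auto

lemma fK_eq:
  assumes "K 2 > 0" "K 3 > 0" "K 4 > 0" "K 5 > 0" "K 1 > 0"
  shows "fK K k D sinn mu (b,s) =
    (mu s * b - D * b * min 1 (K 4 * b),
     - k * mu s * b * min 1 (K 2 * s) + D * sinn - D * s * min 1 (K 5 * s))"
  using assms unfolding fK_def five by (simp add: lam_def nuK_def field_simps)

lemma f_diff:
  assumes "K 2 > 0" "K 3 > 0" "K 4 > 0" "K 5 > 0" "K 1 > 0"
  shows "fK K k D sinn mu (b,s) - f k D sinn mu (b,s) =
    (D * b * max 0 (1 - K 4 * b),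
     k * mu s * b * max 0 (1 - K 2 * s) + D * s * max 0 (1 - K 5 * s))"
proof -
  have e: "1 - min 1 t = max 0 (1 - t)" for t :: real by (simp add: min_def max_def)
  have e2: "min 1 t = 1 - max 0 (1 - t)" for t :: real by (simp add: min_def max_def)
  show ?thesis unfolding fK_eq[OF assms] f_def
    by (simp add: e2 algebra_simps del: max.absorb_iff2 max.absorb_iff1)
qed

lemma f_bound:
  assumes "K 2 > 0" "K 3 > 0" "K 4 > 0" "K 5 > 0" "K 1 > 0"
    and "b \<ge> 0" "s \<ge> 0" "k > 0" "D > 0" "mu s \<ge> 0"
  shows "norm (fK K k D sinn mu (b,s) - f k D sinn mu (b,s))
    \<le> max 0 (1 - K 2 * s) * k * mu s * b + max 0 (1 - K 4 * b) * D * b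
                  + max 0 (1 - K 5 * s) * D * s"
proof -
  have "norm (fK K k D sinn mu (b,s) - f k D sinn mu (b,s)) \<le>
     norm (D * b * max 0 (1 - K 4 * b)) +
     norm (k * mu s * b * max 0 (1 - K 2 * s) + D * s * max 0 (1 - K 5 * s))"
    unfolding f_diff[OF assms(1-5)] by (rule norm_Pair_le)
  also have "\<dots> = D * b * max 0 (1 - K 4 * b) +
     (k * mu s * b * max 0 (1 - K 2 * s) + D * s * max 0 (1 - K 5 * s))"
    using assms by simp
  finally show ?thesis by (simp add: algebra_simps)
qed

lemma f_zero:
  assumes "\<forall>i\<in>{1..5}. K i > 0" "b \<ge> 0" "s \<ge> 0" "k > 0" "D > 0" "mu s \<ge> 0"
    and "mu 0 = 0"
    and "b > 0 \<Longrightarrow> K 4 * b \<ge> 1" "s > 0 \<Longrightarrow> K 2 * s \<ge> 1" "s > 0 \<Longrightarrow> K 5 * s \<ge> 1"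
  shows "norm (fK K k D sinn mu (b,s) - f k D sinn mu (b,s)) \<le> 0"
proof -
  have K: "K 2 > 0" "K 3 > 0" "K 4 > 0" "K 5 > 0" "K 1 > 0" using assms(1) by auto
  have a: "max 0 (1 - K 4 * b) * D * b = 0"
    using assms by (cases "b > 0") auto
  have c: "max 0 (1 - K 2 * s) * k * mu s * b = 0"
    using assms by (cases "s > 0") auto
  have d: "max 0 (1 - K 5 * s) * D * s = 0"
    using assms by (cases "s > 0") auto
  show ?thesis using f_bound[of K b s k D mu sinn] K assms(2-6) a c d by simp
qed


lemma minb1: fixes c t :: real assumes "c > 0" "t \<ge> 0" shows "\<bar>min 1 (c*t) / c\<bar> \<le> 1 / c"
proof -
  have "0 \<le> min 1 (c*t)" "min 1 (c*t) \<le> 1" using assms mult_nonneg_nonneg[of c t] by (simp_all add: min_def)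
  then show ?thesis using assms by (simp add: divide_right_mono)
qed

lemma minb2: fixes c t :: real assumes "c > 0" "t \<ge> 0" shows "\<bar>min 1 (c*t) / c - 1 / c\<bar> \<le> 1 / c"
proof -
  have h: "0 \<le> min 1 (c*t)" "min 1 (c*t) \<le> 1" using assms mult_nonneg_nonneg[of c t] by (simp_all add: min_def)
  have "min 1 (c*t) / c - 1 / c = - ((1 - min 1 (c*t)) / c)" by (simp add: diff_divide_distrib)
  moreover have "0 \<le> (1 - min 1 (c*t)) / c" "(1 - min 1 (c*t)) / c \<le> 1 / c"
    using h assms by (auto simp: divide_right_mono)
  ultimately show ?thesis by simp
qed

lemma Kmin_props:
  assumes "\<forall>i\<in>{1..5}. K i > 0" "i \<in> {1..5}"
  shows "Kmin K \<le> K i" "Kmin K > 0" "1 / K i \<le> 1 / Kmin K"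
proof -
  show a: "Kmin K \<le> K i" unfolding Kmin_def using assms(2) by (intro Min_le) auto
  have "Kmin K \<in> K ` {1..5}" unfolding Kmin_def by (intro Min_in) auto
  then show b: "Kmin K > 0" using assms(1) by auto
  show "1 / K i \<le> 1 / Kmin K" using a b by (intro divide_left_mono) auto
qed

lemma nu_diff:
  assumes "\<forall>i\<in>{1..5}. K i > 0" "i \<in> {1..5}" "b \<ge> 0" "s \<ge> 0"
  shows "norm (nuK K i (b,s) - nu K i) \<le> 1 / K i"
    "norm (nuK K i (b,s)) \<le> norm (nu K i)"
proof -
  have K: "K 2 > 0" "K 3 > 0" "K 4 > 0" "K 5 > 0" "K 1 > 0" using assms(1) by auto
  from assms(2) have "i=1 \<or> i=2 \<or> i=3 \<or> i=4 \<or> i=5" by auto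
  then show "norm (nuK K i (b,s) - nu K i) \<le> 1 / K i"
    using K minb2[of "K 2" s] minb2[of "K 4" b] minb2[of "K 5" s] assms(3,4)
    by (auto simp: nuK_def nu_def)
  from \<open>i=1 \<or> _\<close> show "norm (nuK K i (b,s)) \<le> norm (nu K i)"
    using K minb1[of "K 2" s] minb1[of "K 4" b] minb1[of "K 5" s] assms(3,4)
    by (auto simp: nuK_def nu_def)
qed

theorem lemma1:
  fixes K :: "nat \<Rightarrow> real" and k D sinn mumax :: real and mu :: "real \<Rightarrow> real"
  assumes k_pos: "k > 0" and D_pos: "D > 0" and sin_pos: "sinn > 0"
    and K_pos: "\<forall>i\<in>{1..5}. K i > 0"
    and mu0: "mu 0 = 0"
    and mu_pos: "\<forall>s>0. mu s > 0"
    and mu_nonneg: "\<forall>s\<ge>0. 0 \<le> mu s"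
    and mu_bdd: "\<forall>s\<ge>0. mu s \<le> mumax"
    and mu_cont: "continuous (at 0 within {0..}) mu"
  shows
    "(\<forall>i\<in>{1..5}. \<forall>x\<in>Rplus2. norm (nuK K i x) \<le> norm (nu K i))
   \<and> (\<forall>x\<in>Rplus2 - RK K.
        (\<forall>i\<in>{1..5}. nuK K i x = nu K i)
        \<and> mK K k D sinn mu x = m K k D sinn mu x
        \<and> fK K k D sinn mu x = f k D sinn mu x)
   \<and> (\<forall>x\<in>Rplus2. (\<forall>i\<in>{1..5}. norm (nuK K i x - nu K i) \<le> 1 / Kmin K)
        \<and> norm (mK K k D sinn mu x - m K k D sinn mu x) \<le> 1 / Kmin K
        \<and> (case x of (b, s) \<Rightarrow>
             norm (fK K k D sinn mu x - f k D sinn mu x)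
               \<le> max 0 (1 - K 2 * s) * k * mu s * b + max 0 (1 - K 4 * b) * D * b
                  + max 0 (1 - K 5 * s) * D * s))
   \<and> (\<forall>x\<in>Rplus2. \<forall>\<epsilon>>0. \<exists>M. \<forall>K'. (\<forall>i\<in>{1..5}. K' i \<ge> M) \<longrightarrow>
        norm (fK K' k D sinn mu x - f k D sinn mu x) < \<epsilon>)
   \<and> (\<forall>C. compact C \<and> C \<subseteq> {0<..} \<times> {0<..} \<longrightarrow>
        (\<forall>\<epsilon>>0. \<exists>M. \<forall>K'. (\<forall>i\<in>{1..5}. K' i \<ge> M) \<longrightarrow>
          (\<forall>x\<in>C. norm (fK K' k D sinn mu x - f k D sinn mu x) < \<epsilon>)))"
proof -
  have K: "K 2 > 0" "K 3 > 0" "K 4 > 0" "K 5 > 0" "K 1 > 0" using K_pos by auto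
  have P1: "\<forall>i\<in>{1..5}. \<forall>x\<in>Rplus2. norm (nuK K i x) \<le> norm (nu K i)"
    using nu_diff(2)[OF K_pos] by (auto simp: Rplus2_def)
  have P2: "\<forall>x\<in>Rplus2 - RK K.
        (\<forall>i\<in>{1..5}. nuK K i x = nu K i)
        \<and> mK K k D sinn mu x = m K k D sinn mu x
        \<and> fK K k D sinn mu x = f k D sinn mu x"
  proof
    fix x assume x: "x \<in> Rplus2 - RK K"
    obtain b s where xs: "x = (b,s)" by (cases x)
    have bs: "b \<ge> 0" "s \<ge> 0" "b > 1 / K 4" "s > 1 / K 2" "s > 1 / K 5"
      using x by (auto simp: xs Rplus2_def RK_def)
    have "K 4 * b > 1" using bs(3) K(3) by (simp add: divide_less_eq mult.commute)
    hence m4: "min 1 (K 4 * b) = 1" by simp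
    have "K 2 * s > 1" using bs(4) K(1) by (simp add: divide_less_eq mult.commute)
    hence m2: "min 1 (K 2 * s) = 1" by simp
    have "K 5 * s > 1" using bs(5) K(4) by (simp add: divide_less_eq mult.commute)
    hence m5: "min 1 (K 5 * s) = 1" by simp
    have A: "\<forall>i\<in>{1..5}. nuK K i x = nu K i"
      using m2 m4 m5 by (auto simp: xs nuK_def nu_def)
    moreover have "mK K k D sinn mu x = m K k D sinn mu x"
      unfolding mK_def m_def using A by (intro sum.cong) auto
    moreover have "fK K k D sinn mu x = f k D sinn mu x"
      using fK_eq[OF K, of k D sinn mu b s] m2 m4 m5 by (simp add: xs f_def right_diff_distrib)
    ultimately show "(\<forall>i\<in>{1..5}. nuK K i x = nu K i)
        \<and> mK K k D sinn mu x = m K k D sinn mu x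
        \<and> fK K k D sinn mu x = f k D sinn mu x" by blast
  qed
  have P3: "\<forall>x\<in>Rplus2. (\<forall>i\<in>{1..5}. norm (nuK K i x - nu K i) \<le> 1 / Kmin K)
        \<and> norm (mK K k D sinn mu x - m K k D sinn mu x) \<le> 1 / Kmin K
        \<and> (case x of (b, s) \<Rightarrow>
             norm (fK K k D sinn mu x - f k D sinn mu x)
               \<le> max 0 (1 - K 2 * s) * k * mu s * b + max 0 (1 - K 4 * b) * D * b
                  + max 0 (1 - K 5 * s) * D * s)"
  proof
    fix x assume x: "x \<in> Rplus2"
    obtain b s where xs: "x = (b,s)" by (cases x)
    have bs: "b \<ge> 0" "s \<ge> 0" using x by (auto simp: xs Rplus2_def)
    have N: "\<forall>i\<in>{1..5}. norm (nuK K i x - nu K i) \<le> 1 / Kmin K"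
      using nu_diff(1)[OF K_pos _ bs] Kmin_props(3)[OF K_pos] xs by (meson order_trans)
    have lnn: "lam K k D sinn mu i x \<ge> 0" if "i \<in> {1..5}" for i
      using that K bs D_pos k_pos sin_pos mu_nonneg by (auto simp: lam_def xs)
    have "lamtot K k D sinn mu x \<ge> lam K k D sinn mu 3 x"
      unfolding lamtot_def using lnn by (intro member_le_sum) auto
    moreover have "lam K k D sinn mu 3 x > 0" using K D_pos sin_pos by (simp add: lam_def xs)
    ultimately have tpos: "lamtot K k D sinn mu x > 0" by linarith
    have lbn: "lambar K k D sinn mu i x \<ge> 0" if "i \<in> {1..5}" for i
      using lnn[OF that] tpos by (simp add: lambar_def)
    have s1: "(\<Sum>i\<in>{1..5}. lambar K k D sinn mu i x) = 1"
      unfolding lambar_def sum_divide_distrib[symmetric] lamtot_def[symmetric] using tpos by simp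
    have "mK K k D sinn mu x - m K k D sinn mu x
        = (\<Sum>i\<in>{1..5}. lambar K k D sinn mu i x *\<^sub>R (nuK K i x - nu K i))"
      unfolding mK_def m_def sum_subtractf[symmetric] by (simp add: scaleR_diff_right)
    hence "norm (mK K k D sinn mu x - m K k D sinn mu x)
        \<le> (\<Sum>i\<in>{1..5}. norm (lambar K k D sinn mu i x *\<^sub>R (nuK K i x - nu K i)))"
      by (metis norm_sum)
    also have "\<dots> \<le> (\<Sum>i\<in>{1..5}. lambar K k D sinn mu i x * (1 / Kmin K))"
    proof (intro sum_mono)
      fix i :: nat assume i: "i \<in> {1..5}"
      have "norm (lambar K k D sinn mu i x *\<^sub>R (nuK K i x - nu K i))
          = lambar K k D sinn mu i x * norm (nuK K i x - nu K i)" using lbn[OF i] by simp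
      also have "\<dots> \<le> lambar K k D sinn mu i x * (1 / Kmin K)"
        using lbn[OF i] N i by (intro mult_left_mono) auto
      finally show "norm (lambar K k D sinn mu i x *\<^sub>R (nuK K i x - nu K i))
          \<le> lambar K k D sinn mu i x * (1 / Kmin K)" .
    qed
    also have "\<dots> = (\<Sum>i\<in>{1..5}. lambar K k D sinn mu i x) * (1 / Kmin K)"
      by (rule sum_distrib_right[symmetric])
    also have "\<dots> = 1 / Kmin K" using s1 by simp
    finally have M: "norm (mK K k D sinn mu x - m K k D sinn mu x) \<le> 1 / Kmin K" .
    have F: "norm (fK K k D sinn mu x - f k D sinn mu x)
               \<le> max 0 (1 - K 2 * s) * k * mu s * b + max 0 (1 - K 4 * b) * D * b
                  + max 0 (1 - K 5 * s) * D * s"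
      unfolding xs using f_bound[OF K bs k_pos D_pos] mu_nonneg bs by auto
    show "(\<forall>i\<in>{1..5}. norm (nuK K i x - nu K i) \<le> 1 / Kmin K)
        \<and> norm (mK K k D sinn mu x - m K k D sinn mu x) \<le> 1 / Kmin K
        \<and> (case x of (b, s) \<Rightarrow>
             norm (fK K k D sinn mu x - f k D sinn mu x)
               \<le> max 0 (1 - K 2 * s) * k * mu s * b + max 0 (1 - K 4 * b) * D * b
                  + max 0 (1 - K 5 * s) * D * s)"
      using N M F by (simp add: xs)
  qed
  have P4: "\<forall>x\<in>Rplus2. \<forall>\<epsilon>>0. \<exists>M. \<forall>K'. (\<forall>i\<in>{1..5}. K' i \<ge> M) \<longrightarrow>
        norm (fK K' k D sinn mu x - f k D sinn mu x) < \<epsilon>"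
  proof (intro ballI allI impI)
    fix x and e :: real assume x: "x \<in> Rplus2" and e: "e > 0"
    obtain b s where xs: "x = (b,s)" by (cases x)
    have bs: "b \<ge> 0" "s \<ge> 0" using x by (auto simp: xs Rplus2_def)
    define pb where "pb = (if b > 0 then 1/b else 0)"
    define ps where "ps = (if s > 0 then 1/s else 0)"
    have pb0: "pb \<ge> 0" and ps0: "ps \<ge> 0" unfolding pb_def ps_def by auto
    define M where "M = max pb ps + 1"
    have mx: "max pb ps \<ge> pb" "max pb ps \<ge> ps" by auto
    have Mp: "M > 0" unfolding M_def using mx pb0 by linarith
    have Mb: "b > 0 \<Longrightarrow> M \<ge> 1/b" unfolding M_def using mx by (simp add: pb_def)
    have Ms: "s > 0 \<Longrightarrow> M \<ge> 1/s" unfolding M_def using mx by (simp add: ps_def)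
    show "\<exists>M. \<forall>K'. (\<forall>i\<in>{1..5}. K' i \<ge> M) \<longrightarrow>
        norm (fK K' k D sinn mu x - f k D sinn mu x) < e"
    proof (intro exI allI impI)
      fix K' :: "nat \<Rightarrow> real" assume KM: "\<forall>i\<in>{1..5}. K' i \<ge> M"
      have Kp: "\<forall>i\<in>{1..5}. K' i > 0"
      proof
        fix i :: nat assume "i \<in> {1..5}" then have "K' i \<ge> M" using KM by blast
        then show "K' i > 0" using Mp by linarith
      qed
      have g: "K' i * t \<ge> 1" if "i \<in> {1..5}" "t > 0" "M \<ge> 1/t" for i t
      proof -
        have "K' i \<ge> M" using KM that(1) by blast
        then have "K' i \<ge> 1/t" using that(3) by linarith
        then show ?thesis using that(2) by (simp add: field_simps)
      qed
      have mus: "0 \<le> mu s" using mu_nonneg bs by simp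
      have h4: "b > 0 \<Longrightarrow> K' 4 * b \<ge> 1" using g[of 4 b] Mb by simp
      have h2: "s > 0 \<Longrightarrow> K' 2 * s \<ge> 1" using g[of 2 s] Ms by simp
      have h5: "s > 0 \<Longrightarrow> K' 5 * s \<ge> 1" using g[of 5 s] Ms by simp
      have "norm (fK K' k D sinn mu (b,s) - f k D sinn mu (b,s)) \<le> 0"
        by (rule f_zero[of K' b s k D mu sinn, OF Kp bs(1) bs(2) k_pos D_pos mus mu0 h4 h2 h5])
      then show "norm (fK K' k D sinn mu x - f k D sinn mu x) < e" using e xs by simp
    qed
  qed
  have P5: "\<forall>C. compact C \<and> C \<subseteq> {0<..} \<times> {0<..} \<longrightarrow>
        (\<forall>\<epsilon>>0. \<exists>M. \<forall>K'. (\<forall>i\<in>{1..5}. K' i \<ge> M) \<longrightarrow>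
          (\<forall>x\<in>C. norm (fK K' k D sinn mu x - f k D sinn mu x) < \<epsilon>))"
  proof (intro allI impI)
    fix C :: "(real \<times> real) set" and e :: real
    assume C: "compact C \<and> C \<subseteq> {0<..} \<times> {0<..}" and e: "e > 0"
    show "\<exists>M. \<forall>K'. (\<forall>i\<in>{1..5}. K' i \<ge> M) \<longrightarrow>
          (\<forall>x\<in>C. norm (fK K' k D sinn mu x - f k D sinn mu x) < e)"
    proof (cases "C = {}")
      case True then show ?thesis by auto
    next
      case False
      have c1: "compact (fst ` C)" "compact (snd ` C)"
        using C compact_continuous_image[OF continuous_on_fst[OF continuous_on_id], of C]
          compact_continuous_image[OF continuous_on_snd[OF continuous_on_id], of C] by auto
      obtain p where p: "p \<in> fst ` C" "\<forall>t\<in>fst ` C. p \<le> t"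
        using compact_attains_inf[OF c1(1)] False by blast
      obtain q where q: "q \<in> snd ` C" "\<forall>t\<in>snd ` C. q \<le> t"
        using compact_attains_inf[OF c1(2)] False by blast
      have pq: "p > 0" "q > 0" using p(1) q(1) C by auto
      define M where "M = max (1/p) (1/q) + 1"
      have "1/p > 0" using pq by auto
      hence Mp: "M > 0" unfolding M_def by (smt (verit) max.cobounded1)
      show ?thesis
      proof (intro exI allI impI ballI)
        fix K' :: "nat \<Rightarrow> real" and x assume KM: "\<forall>i\<in>{1..5}. K' i \<ge> M" and x: "x \<in> C"
        obtain b s where xs: "x = (b,s)" by (cases x)
        have bs: "b \<ge> p" "s \<ge> q" using p q x xs by force+
        have Kp: "\<forall>i\<in>{1..5}. K' i > 0" using KM Mp by force
        have g: "K' i * t \<ge> 1" if "i \<in> {1..5}" "t \<ge> r" "r > 0" "M \<ge> 1/r" for i t r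
        proof -
          have "K' i \<ge> 1/r" using KM that by force
          hence "K' i * r \<ge> 1" using that by (simp add: field_simps)
          moreover have "K' i * r \<le> K' i * t" using that Kp by (intro mult_left_mono) (auto intro: less_imp_le)
          ultimately show ?thesis by linarith
        qed
        have M1: "M \<ge> 1/p" "M \<ge> 1/q" unfolding M_def by auto
        have b0: "b \<ge> 0" using bs pq by linarith
        have s0: "s \<ge> 0" using bs pq by linarith
        have mus: "0 \<le> mu s" using mu_nonneg s0 by simp
        have h4': "K' 4 * b \<ge> 1" by (rule g[where i=4 and t=b and r=p, OF _ bs(1) pq(1) M1(1)]) simp
        have h4: "b > 0 \<Longrightarrow> K' 4 * b \<ge> 1" using h4' by simp
        have h2': "K' 2 * s \<ge> 1" by (rule g[where i=2 and t=s and r=q, OF _ bs(2) pq(2) M1(2)]) simp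
        have h2: "s > 0 \<Longrightarrow> K' 2 * s \<ge> 1" using h2' by simp
        have h5': "K' 5 * s \<ge> 1" by (rule g[where i=5 and t=s and r=q, OF _ bs(2) pq(2) M1(2)]) simp
        have h5: "s > 0 \<Longrightarrow> K' 5 * s \<ge> 1" using h5' by simp
        have "norm (fK K' k D sinn mu (b,s) - f k D sinn mu (b,s)) \<le> 0"
          by (rule f_zero[of K' b s k D mu sinn, OF Kp b0 s0 k_pos D_pos mus mu0 h4 h2 h5])
        then show "norm (fK K' k D sinn mu x - f k D sinn mu x) < e" using e xs by simp
      qed
    qed
  qed
  show ?thesis by (rule conjI[OF P1 conjI[OF P2 conjI[OF P3 conjI[OF P4 P5]]]])
qed

end
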